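(* Let $G$ be a $2$-Engel group, i.e. $[x,y,y]=1$ for all $x,y\in G$. If the set $\{x\in G:x^3=1\}$ is $2$-large in $G$, then $G$ has exponent $3$.
   Context: $[x,y]=x^{-1}y^{-1}xy$ and $[x,y,z]=[[x,y],z]$. A subset $X\subseteq G$ is $2$-large in $G$ if $aX\cap bX\ne\emptyset$ for all $a,b\in G$. *)

theory Defs
  imports "HOL-Algebra.Group"
begin

definition comm :: "('a, 'b) monoid_scheme \<Rightarrow> 'a \<Rightarrow> 'a \<Rightarrow> 'a" where
  "comm G x y = inv\<^bsub>G\<^esub> x \<otimes>\<^bsub>G\<^esub> inv\<^bsub>G\<^esub> y \<otimes>\<^bsub>G\<^esub> x \<otimes>\<^bsub>G\<^esub> y"

definition comm3 :: "('a, 'b) monoid_scheme \<Rightarrow> 'a \<Rightarrow> 'a \<Rightarrow> 'a \<Rightarrow> 'a" where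
  "comm3 G x y z = comm G (comm G x y) z"

definition two_engel :: "('a, 'b) monoid_scheme \<Rightarrow> bool" where
  "two_engel G \<longleftrightarrow> (\<forall>x\<in>carrier G. \<forall>y\<in>carrier G. comm3 G x y y = \<one>\<^bsub>G\<^esub>)"

definition two_large :: "('a, 'b) monoid_scheme \<Rightarrow> 'a set \<Rightarrow> bool" where
  "two_large G X \<longleftrightarrow> (\<forall>a\<in>carrier G. \<forall>b\<in>carrier G. ((\<lambda>x. a \<otimes>\<^bsub>G\<^esub> x) ` X) \<inter> ((\<lambda>x. b \<otimes>\<^bsub>G\<^esub> x) ` X) \<noteq> {})"

end

theory Submission
  imports Defs
begin

context group
begin

lemma cube_eq: "x \<in> carrier G \<Longrightarrow> x [^] (3::nat) = x \<otimes> x \<otimes> x"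
  by (simp add: numeral_3_eq_3 nat_pow_Suc)

lemma canc1 [simp]: "x \<in> carrier G \<Longrightarrow> z \<in> carrier G \<Longrightarrow> x \<otimes> (inv x \<otimes> z) = z"
  by (simp add: m_assoc[symmetric])

lemma canc2 [simp]: "x \<in> carrier G \<Longrightarrow> z \<in> carrier G \<Longrightarrow> inv x \<otimes> (x \<otimes> z) = z"
  by (simp add: m_assoc[symmetric])

lemma comm_one_commute:
  assumes x: "x \<in> carrier G" and y: "y \<in> carrier G" and h: "comm G x y = \<one>"
  shows "x \<otimes> y = y \<otimes> x"
proof -
  have "inv (y \<otimes> x) \<otimes> (x \<otimes> y) = \<one>"
    using h x y by (simp add: comm_def inv_mult_group m_assoc)
  hence "(y \<otimes> x) \<otimes> (inv (y \<otimes> x) \<otimes> (x \<otimes> y)) = y \<otimes> x" using x y by simp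
  thus ?thesis using x y canc1[of "y \<otimes> x" "x \<otimes> y"] by simp
qed

lemma comm_inv_swap:
  assumes x: "x \<in> carrier G" and y: "y \<in> carrier G"
  shows "comm G y x = inv (comm G x y)"
  using x y by (simp add: comm_def inv_mult_group m_assoc)

lemma inv3: "a \<in> carrier G \<Longrightarrow> a \<otimes> a \<otimes> a = \<one> \<Longrightarrow> inv a \<otimes> inv a \<otimes> inv a = \<one>"
proof -
  assume a: "a \<in> carrier G" and h: "a \<otimes> a \<otimes> a = \<one>"
  have "inv a \<otimes> inv a \<otimes> inv a = inv (a \<otimes> a \<otimes> a)" using a by (simp add: inv_mult_group m_assoc)
  thus ?thesis using h by simp
qed

lemma commute_inv:
  assumes a: "a \<in> carrier G" and c: "c \<in> carrier G" and h: "c \<otimes> a = a \<otimes> c"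
  shows "c \<otimes> inv a = inv a \<otimes> c"
proof -
  have "inv a \<otimes> (c \<otimes> a) \<otimes> inv a = inv a \<otimes> (a \<otimes> c) \<otimes> inv a" using h by simp
  thus ?thesis using a c by (simp add: m_assoc)
qed

lemma commute_inv2:
  assumes a: "a \<in> carrier G" and c: "c \<in> carrier G" and h: "c \<otimes> a = a \<otimes> c"
  shows "inv c \<otimes> a = a \<otimes> inv c"
  using commute_inv[OF c a h[symmetric]] by simp

lemma lcomm:
  assumes a: "a \<in> carrier G" and c: "c \<in> carrier G" and h: "c \<otimes> a = a \<otimes> c"
  shows "z \<in> carrier G \<Longrightarrow> a \<otimes> (c \<otimes> z) = c \<otimes> (a \<otimes> z)"
  using h a c by (simp add: m_assoc[symmetric])

lemma key:
  assumes a: "a \<in> carrier G" and y: "y \<in> carrier G"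
    and a3: "a \<otimes> a \<otimes> a = \<one>" and y3: "y \<otimes> y \<otimes> y = \<one>"
    and cdef: "c = inv y \<otimes> inv a \<otimes> y \<otimes> a"
    and ca: "c \<otimes> a = a \<otimes> c" and cy: "c \<otimes> y = y \<otimes> c"
  shows "(y \<otimes> a) \<otimes> (y \<otimes> a) \<otimes> (y \<otimes> a) = \<one>"
proof -
  have c: "c \<in> carrier G" using cdef a y by simp
  have cia: "c \<otimes> inv a = inv a \<otimes> c"
    using commute_inv[OF a c ca] .
  have e1: "inv y \<otimes> inv a \<otimes> y = c \<otimes> inv a"
    using cdef a y c by (simp add: m_assoc)
  have ia3: "inv a \<otimes> inv a \<otimes> inv a = \<one>"
    using inv3[OF a a3] .
  have "\<one> = inv y \<otimes> (inv a \<otimes> inv a \<otimes> inv a) \<otimes> y" using ia3 y by simp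
  also have "\<dots> = (inv y \<otimes> inv a \<otimes> y) \<otimes> (inv y \<otimes> inv a \<otimes> y) \<otimes> (inv y \<otimes> inv a \<otimes> y)"
    using a y by (simp add: m_assoc)
  also have "\<dots> = (c \<otimes> inv a) \<otimes> (c \<otimes> inv a) \<otimes> (c \<otimes> inv a)" using e1 by simp
  also have "\<dots> = c \<otimes> c \<otimes> c \<otimes> (inv a \<otimes> inv a \<otimes> inv a)"
    using a c lcomm[OF inv_closed[OF a] c cia] cia[symmetric] by (simp add: m_assoc)
  also have "\<dots> = c \<otimes> c \<otimes> c" using ia3 c by simp
  finally have c3: "c \<otimes> c \<otimes> c = \<one>" by simp
  define d where "d = inv c"
  have d: "d \<in> carrier G" using c d_def by simp
  have da: "d \<otimes> a = a \<otimes> d"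
    using commute_inv2[OF a c ca] d_def by simp
  have dy: "d \<otimes> y = y \<otimes> d"
    using commute_inv2[OF y c cy] d_def by simp
  have d3: "d \<otimes> d \<otimes> d = \<one>"
    using inv3[OF c c3] d_def by simp
  have ay: "a \<otimes> y = y \<otimes> a \<otimes> d"
  proof -
    have "a \<otimes> y \<otimes> c = y \<otimes> a"
      using a y c cdef by (simp add: m_assoc)
    hence "y \<otimes> a \<otimes> d = a \<otimes> y \<otimes> c \<otimes> inv c" using d_def by simp
    thus ?thesis using a y c by (simp add: m_assoc)
  qed
  have ay2: "a \<otimes> (y \<otimes> z) = y \<otimes> (a \<otimes> (d \<otimes> z))" if "z \<in> carrier G" for z
    using ay a y d that by (simp add: m_assoc[symmetric])
  have "(y \<otimes> a) \<otimes> (y \<otimes> a) \<otimes> (y \<otimes> a) = (d \<otimes> d \<otimes> d) \<otimes> (y \<otimes> y \<otimes> y) \<otimes> (a \<otimes> a \<otimes> a)"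
    using a y d ay2 ay lcomm[OF a d da] lcomm[OF y d dy] da[symmetric] dy[symmetric] by (simp add: m_assoc)
  also have "\<dots> = \<one>" using y3 a3 d3 by simp
  finally show ?thesis .
qed

end

theorem theorem4p4:
  fixes G (structure)
  assumes "group G"
    and "two_engel G"
    and "two_large G {x \<in> carrier G. x [^] (3::nat) = \<one>}"
  shows "\<forall>x\<in>carrier G. x [^] (3::nat) = \<one>"
proof
  interpret group G by (rule assms(1))
  fix g assume g: "g \<in> carrier G"
  let ?X = "{x \<in> carrier G. x [^] (3::nat) = \<one>}"
  have "((\<lambda>x. g \<otimes> x) ` ?X) \<inter> ((\<lambda>x. \<one> \<otimes> x) ` ?X) \<noteq> {}"
    using assms(3) g unfolding two_large_def by blast
  then obtain x y where x: "x \<in> carrier G" "x [^] (3::nat) = \<one>"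
    and y: "y \<in> carrier G" "y [^] (3::nat) = \<one>" and e: "g \<otimes> x = \<one> \<otimes> y"
    by blast
  define a where "a = inv x"
  have a: "a \<in> carrier G" using x a_def by simp
  have "g = g \<otimes> x \<otimes> inv x" using g x by (simp add: m_assoc)
  hence ga: "g = y \<otimes> a" using e y a_def by simp
  have "x \<otimes> x \<otimes> x = \<one>" using x cube_eq by simp
  hence a3: "a \<otimes> a \<otimes> a = \<one>" using inv3[OF x(1)] a_def by simp
  have y3: "y \<otimes> y \<otimes> y = \<one>" using y cube_eq by simp
  define c where "c = inv y \<otimes> inv a \<otimes> y \<otimes> a"
  have cc: "c = comm G y a" by (simp add: c_def comm_def)
  have c: "c \<in> carrier G" using c_def a y by simp
  have "comm3 G y a a = \<one>" using assms(2) a y unfolding two_engel_def by blast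
  hence "comm G c a = \<one>" by (simp add: comm3_def cc)
  hence ca: "c \<otimes> a = a \<otimes> c" using comm_one_commute[OF c a] by simp
  have dc: "comm G a y \<in> carrier G" using a y by (simp add: comm_def)
  have "comm3 G a y y = \<one>" using assms(2) a y unfolding two_engel_def by blast
  hence "comm G (comm G a y) y = \<one>" by (simp add: comm3_def)
  hence dy: "comm G a y \<otimes> y = y \<otimes> comm G a y"
    using comm_one_commute[OF dc y(1)] by simp
  have cinv: "c = inv (comm G a y)" using comm_inv_swap[OF a y(1)] cc by simp
  have cy: "c \<otimes> y = y \<otimes> c"
    using commute_inv2[OF y(1) dc dy] cinv by simp
  have "g \<otimes> g \<otimes> g = \<one>" using key[OF a y(1) a3 y3 c_def ca cy] ga by simp
  thus "g [^] (3::nat) = \<one>" using g cube_eq by simp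
qed

end
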